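(* Consider MDVI$(\alpha,K,M)$ with any $\alpha\in[0,1)$ and positive integers $K,M$ on an MDP as in the context, and let $\delta\in(0,1)$. Let $\mathcal{E}_2$ be the event that $\|\varepsilon_k\|_\infty < 3H\sqrt{\iota_1/M}$ for all $k\in\{1,\dots,K\}$. Then $\mathbb{P}(\mathcal{E}_2^c)\leq\delta/4$.
   Context: MDP: finite state set $\mathcal{X}$, finite action set $\mathcal{A}$, discount $\gamma\in[0,1)$, reward $r\in[-1,1]^{\mathcal{X}\times\mathcal{A}}$, transition kernel $P(y|x,a)$, $H=1/(1-\gamma)$, $(Pv)(x,a)=\sum_y P(y|x,a)v(y)$. MDVI$(\alpha,K,M)$: $s_0 = 0$, $w_0=w_{-1}=0$; for $k=0,\dots,K-1$: $v_k = w_k-\alpha w_{k-1}$; for each $(x,a)$, independent samples $y_{k,m,x,a}\sim P(\cdot|x,a)$, $m\in[M]$; $q_{k+1}(x,a) = r(x,a)+\frac{\gamma}{M}\sum_m v_k(y_{k,m,x,a})$; $s_{k+1}=q_{k+1}+\alpha s_k$; $w_{k+1}(x)=\max_a s_{k+1}(x,a)$. Notation: $\widehat P_k v(x,a) = \frac1M\sum_m v(y_{k,m,x,a})$; $\varepsilon_k = \gamma\widehat P_{k-1}v_{k-1} - \gamma P v_{k-1}$ for $k\in[K]$; $\iota_1 = \log(8K|\mathcal{X}||\mathcal{A}|/\delta)$. *)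

theory Defs
  imports "HOL-Probability.Probability"
begin


(* Joint law of all samples: independent, y_{k,m,x,a} ~ P(.|x,a). *)
definition sample_pmf :: "('x::finite \<Rightarrow> 'a::finite \<Rightarrow> 'x pmf) \<Rightarrow> nat \<Rightarrow> nat
    \<Rightarrow> (nat \<times> nat \<times> 'x \<times> 'a \<Rightarrow> 'x) pmf" where
  "sample_pmf P K M = Pi_pmf ({0..<K} \<times> {0..<M} \<times> UNIV) undefined
      (\<lambda>(k, m, x, a). P x a)"

(* State of MDVI after k iterations: (s_k, w_k, w_{k-1}). *)
fun mdvi_state :: "real \<Rightarrow> real \<Rightarrow> ('x::finite \<Rightarrow> 'a::finite \<Rightarrow> real) \<Rightarrow> nat
    \<Rightarrow> (nat \<times> nat \<times> 'x \<times> 'a \<Rightarrow> 'x) \<Rightarrow> nat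
    \<Rightarrow> ('x \<Rightarrow> 'a \<Rightarrow> real) \<times> ('x \<Rightarrow> real) \<times> ('x \<Rightarrow> real)" where
  "mdvi_state \<alpha> \<gamma> r M \<omega> 0 = ((\<lambda>_ _. 0), (\<lambda>_. 0), (\<lambda>_. 0))"
| "mdvi_state \<alpha> \<gamma> r M \<omega> (Suc k) =
     (let (s, w, wp) = mdvi_state \<alpha> \<gamma> r M \<omega> k;
          v = (\<lambda>y. w y - \<alpha> * wp y);
          q = (\<lambda>x a. r x a + \<gamma> / real M * (\<Sum>m<M. v (\<omega> (k, m, x, a))));
          s' = (\<lambda>x a. q x a + \<alpha> * s x a);
          w' = (\<lambda>x. Max (range (\<lambda>a. s' x a)))
      in (s', w', w))"

definition mdvi_v :: "real \<Rightarrow> real \<Rightarrow> ('x::finite \<Rightarrow> 'a::finite \<Rightarrow> real) \<Rightarrow> nat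
    \<Rightarrow> (nat \<times> nat \<times> 'x \<times> 'a \<Rightarrow> 'x) \<Rightarrow> nat \<Rightarrow> 'x \<Rightarrow> real" where
  "mdvi_v \<alpha> \<gamma> r M \<omega> k y =
     (case mdvi_state \<alpha> \<gamma> r M \<omega> k of (s, w, wp) \<Rightarrow> w y - \<alpha> * wp y)"

definition emp_P :: "nat \<Rightarrow> (nat \<times> nat \<times> 'x \<times> 'a \<Rightarrow> 'x) \<Rightarrow> nat \<Rightarrow> ('x \<Rightarrow> real)
    \<Rightarrow> 'x \<Rightarrow> 'a \<Rightarrow> real" where
  "emp_P M \<omega> k v x a = (1 / real M) * (\<Sum>m<M. v (\<omega> (k, m, x, a)))"

definition trans_P :: "('x::finite \<Rightarrow> 'a \<Rightarrow> 'x pmf) \<Rightarrow> ('x \<Rightarrow> real) \<Rightarrow> 'x \<Rightarrow> 'a \<Rightarrow> real" where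
  "trans_P P v x a = (\<Sum>y\<in>UNIV. pmf (P x a) y * v y)"

definition mdvi_eps :: "real \<Rightarrow> real \<Rightarrow> ('x::finite \<Rightarrow> 'a::finite \<Rightarrow> real)
    \<Rightarrow> ('x \<Rightarrow> 'a \<Rightarrow> 'x pmf) \<Rightarrow> nat \<Rightarrow> (nat \<times> nat \<times> 'x \<times> 'a \<Rightarrow> 'x) \<Rightarrow> nat
    \<Rightarrow> 'x \<Rightarrow> 'a \<Rightarrow> real" where
  "mdvi_eps \<alpha> \<gamma> r P M \<omega> k x a =
     \<gamma> * emp_P M \<omega> (k - 1) (mdvi_v \<alpha> \<gamma> r M \<omega> (k - 1)) x a
     - \<gamma> * trans_P P (mdvi_v \<alpha> \<gamma> r M \<omega> (k - 1)) x a"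

definition sup_norm :: "('x::finite \<Rightarrow> 'a::finite \<Rightarrow> real) \<Rightarrow> real" where
  "sup_norm f = Max (range (\<lambda>(x, a). \<bar>f x a\<bar>))"

end

theory Submission
  imports Defs
begin

lemma state_dep:
  "(\<And>i m x a. i < k \<Longrightarrow> m < M \<Longrightarrow> \<omega> (i,m,x,a) = \<omega>' (i,m,x,a)) \<Longrightarrow>
   mdvi_state \<alpha> \<gamma> r M \<omega> k = mdvi_state \<alpha> \<gamma> r M \<omega>' k"
proof (induction k)
  case 0 then show ?case by simp
next
  case (Suc k)
  have IH: "mdvi_state \<alpha> \<gamma> r M \<omega> k = mdvi_state \<alpha> \<gamma> r M \<omega>' k" using Suc by auto
  have S: "\<And>v x a. (\<Sum>m<M. v (\<omega> (k, m, x, a))) = (\<Sum>m<M. v (\<omega>' (k, m, x, a)))"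
    by (rule sum.cong) (use Suc.prems in auto)
  show ?case by (simp add: IH S)
qed

lemma bind_pmf_prob_le:
  assumes "\<And>x. x \<in> set_pmf p \<Longrightarrow> measure_pmf.prob (N x) X \<le> c" "0 \<le> c"
  shows "measure_pmf.prob (bind_pmf p N) X \<le> c"
proof -
  have "emeasure (measure_pmf (bind_pmf p N)) X = (\<integral>\<^sup>+x. emeasure (N x) X \<partial>p)" by simp
  also have "\<dots> \<le> ennreal c"
  proof (rule measure_pmf.nn_integral_le_const)
    show "AE x in measure_pmf p. emeasure (measure_pmf (N x)) X \<le> ennreal c"
      by (rule AE_pmfI) (use assms in \<open>auto simp: measure_pmf.emeasure_eq_measure\<close>)
  qed (use assms in auto)
  finally show ?thesis using assms(2) by (simp add: measure_pmf.emeasure_eq_measure)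
qed

lemma v_bound:
  fixes r :: "'x::finite \<Rightarrow> 'a::finite \<Rightarrow> real"
  assumes g: "0 \<le> \<gamma>" "\<gamma> < 1" and r: "\<And>x a. r x a \<in> {-1..1}"
    and al: "0 \<le> \<alpha>" and M: "M > 0"
  shows "case mdvi_state \<alpha> \<gamma> r M \<omega> k of (s,w,wp) \<Rightarrow>
     (\<forall>x. w x = Max (range (s x))) \<and> (\<forall>y. \<bar>w y - \<alpha> * wp y\<bar> \<le> 1 / (1 - \<gamma>))"
proof (induction k)
  case 0 then show ?case using g by simp
next
  case (Suc k)
  define H where "H = 1 / (1 - \<gamma>)"
  have H1: "1 + \<gamma> * H = H" using g by (simp add: H_def field_simps)
  obtain s w wp where st: "mdvi_state \<alpha> \<gamma> r M \<omega> k = (s, w, wp)" by (metis prod_cases3)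
  with Suc have ws: "\<And>x. w x = Max (range (s x))" and vb: "\<And>y. \<bar>w y - \<alpha> * wp y\<bar> \<le> H"
    by (auto simp: H_def)
  define q where "q = (\<lambda>x a. r x a + \<gamma> / real M * (\<Sum>m<M. w (\<omega> (k, m, x, a)) - \<alpha> * wp (\<omega> (k, m, x, a))))"
  have qb: "\<bar>q x a\<bar> \<le> H" for x a
  proof -
    have "\<bar>\<Sum>m<M. w (\<omega> (k, m, x, a)) - \<alpha> * wp (\<omega> (k, m, x, a))\<bar> \<le> (\<Sum>m<M. H)"
      by (rule order_trans[OF sum_abs sum_mono]) (use vb in auto)
    hence d: "\<bar>\<Sum>m<M. w (\<omega> (k, m, x, a)) - \<alpha> * wp (\<omega> (k, m, x, a))\<bar> / real M \<le> H"
      using M by (simp add: divide_le_eq mult.commute)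
    have "\<bar>\<gamma> / real M * (\<Sum>m<M. w (\<omega> (k, m, x, a)) - \<alpha> * wp (\<omega> (k, m, x, a)))\<bar>
       = \<gamma> * (\<bar>\<Sum>m<M. w (\<omega> (k, m, x, a)) - \<alpha> * wp (\<omega> (k, m, x, a))\<bar> / real M)"
      using g by (simp add: abs_mult)
    also have "\<dots> \<le> \<gamma> * H" using d g by (intro mult_left_mono)
    finally have "\<bar>\<gamma> / real M * (\<Sum>m<M. w (\<omega> (k, m, x, a)) - \<alpha> * wp (\<omega> (k, m, x, a)))\<bar> \<le> \<gamma> * H" .
    moreover have "\<bar>r x a\<bar> \<le> 1" using r[of x a] by auto
    ultimately show ?thesis unfolding q_def using H1 by linarith
  qed
  define s' where "s' = (\<lambda>x a. q x a + \<alpha> * s x a)"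
  have "\<bar>Max (range (s' x)) - \<alpha> * w x\<bar> \<le> H" for x
  proof -
    obtain az where az: "s x az = Max (range (s x))"
    proof -
      have "Max (range (s x)) \<in> range (s x)" by (rule Max_in) auto
      then show ?thesis using that by (metis imageE)
    qed
    have up: "Max (range (s' x)) \<le> H + \<alpha> * w x"
    proof (subst Max_le_iff, simp, simp, clarify)
      fix a
      have "s x a \<le> w x" unfolding ws by simp
      hence "\<alpha> * s x a \<le> \<alpha> * w x" using al by (simp add: mult_left_mono)
      thus "s' x a \<le> H + \<alpha> * w x" unfolding s'_def using qb[of x a] by linarith
    qed
    have "s' x az \<le> Max (range (s' x))" by simp
    moreover have "s' x az \<ge> - H + \<alpha> * w x" unfolding s'_def ws az[symmetric] using qb[of x az] by linarith
    ultimately show ?thesis using up by linarith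
  qed
  then show ?case using st by (simp add: Let_def H_def q_def s'_def)
qed

lemma eps_event_bound:
  fixes P :: "'x::finite \<Rightarrow> 'a::finite \<Rightarrow> 'x pmf"
    and r :: "'x \<Rightarrow> 'a \<Rightarrow> real"
  assumes g: "0 \<le> \<gamma>" "\<gamma> < 1" and r: "\<And>x a. r x a \<in> {-1..1}"
    and al: "0 \<le> \<alpha>" and M: "M > 0" and j: "j < K" and t: "t \<ge> 0"
  shows "measure_pmf.prob (sample_pmf P K M)
     {\<omega>. \<bar>mdvi_eps \<alpha> \<gamma> r P M \<omega> (Suc j) xz az\<bar> \<ge> t}
     \<le> 2 * exp (- (real M * t\<^sup>2) / (2 * (1 / (1 - \<gamma>))\<^sup>2))"
proof -
  define H where "H = 1 / (1 - \<gamma>)"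
  have Hpos: "H > 0" using g by (simp add: H_def)
  define Q where "Q = (\<lambda>(k::nat, m::nat, x::'x, a::'a). P x a)"
  define Iall where "Iall = {0..<K} \<times> {0..<M} \<times> (UNIV :: ('x \<times> 'a) set)"
  define B where "B = (\<lambda>m. (j, m, xz, az)) ` {..<M}"
  define A where "A = Iall - B"
  define E where "E = {\<omega>. \<bar>mdvi_eps \<alpha> \<gamma> r P M \<omega> (Suc j) xz az\<bar> \<ge> t}"
  define hh where "hh = (\<lambda>(f::nat \<times> nat \<times> 'x \<times> 'a \<Rightarrow> 'x, g::nat \<times> nat \<times> 'x \<times> 'a \<Rightarrow> 'x) y. if y \<in> A then f y else g y)"
  define pA where "pA = Pi_pmf A undefined Q"
  define pB where "pB = Pi_pmf B undefined Q"
  have finI: "finite Iall" unfolding Iall_def by simp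
  have BI: "B \<subseteq> Iall" using j unfolding B_def Iall_def by auto
  have finB: "finite B" using BI finI finite_subset by blast
  have finA: "finite A" using finI unfolding A_def by simp
  have AB: "A \<union> B = Iall" "A \<inter> B = {}" using BI unfolding A_def by auto
  have "sample_pmf P K M = Pi_pmf (A \<union> B) undefined Q"
    unfolding sample_pmf_def AB Iall_def Q_def by simp
  also have "\<dots> = map_pmf hh (pair_pmf pA pB)"
    unfolding hh_def pA_def pB_def by (rule Pi_pmf_union) (use finA finB AB in auto)
  also have "\<dots> = bind_pmf pA (\<lambda>f. map_pmf (\<lambda>g. hh (f, g)) pB)"
    by (simp add: pair_pmf_def map_bind_pmf map_pmf_def bind_assoc_pmf bind_return_pmf)
  finally have decomp: "sample_pmf P K M = bind_pmf pA (\<lambda>f. map_pmf (\<lambda>g. hh (f, g)) pB)" .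
  define bnd where "bnd = 2 * exp (- (real M * t\<^sup>2) / (2 * H\<^sup>2))"
  have "measure_pmf.prob (map_pmf (\<lambda>g. hh (f, g)) pB) E \<le> bnd" for f
  proof -
    define vf where "vf = mdvi_v \<alpha> \<gamma> r M f j"
    have vfb: "\<bar>vf y\<bar> \<le> H" for y
      using v_bound[where \<omega>=f and k=j and r=r and \<alpha>=\<alpha> and \<gamma>=\<gamma> and M=M, OF g r al M] unfolding vf_def mdvi_v_def H_def
      by (auto split: prod.splits)
    define T where "T = trans_P P vf xz az"
    define \<mu> where "\<mu> = (\<Sum>i\<in>B. measure_pmf.expectation pB (\<lambda>g. vf (g i)))"
    have expi: "measure_pmf.expectation pB (\<lambda>g. vf (g i)) = T" if "i \<in> B" for i
    proof -
      have "measure_pmf.expectation pB (\<lambda>g. vf (g i)) = measure_pmf.expectation (map_pmf (\<lambda>g. g i) pB) vf"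
        by simp
      also have "map_pmf (\<lambda>g. g i) pB = P xz az"
        unfolding pB_def using Pi_pmf_component[OF finB, of i undefined Q] that
        by (auto simp: B_def Q_def)
      also have "measure_pmf.expectation (P xz az) vf = (\<Sum>y\<in>UNIV. vf y * pmf (P xz az) y)"
        by (rule integral_measure_pmf_real) auto
      finally show ?thesis unfolding T_def trans_P_def by (simp add: mult.commute)
    qed
    have cardB: "card B = M" unfolding B_def by (subst card_image) (auto simp: inj_on_def)
    have mu: "\<mu> = real M * T" unfolding \<mu>_def using expi cardB by simp
    have sumB: "(\<Sum>i\<in>B. vf (g i)) = (\<Sum>m<M. vf (g (j, m, xz, az)))" for g
      unfolding B_def by (subst sum.reindex) (auto simp: inj_on_def)
    have sub: "(\<lambda>g. hh (f, g)) -` E \<subseteq> {g \<in> space (measure_pmf pB). \<bar>(\<Sum>i\<in>B. vf (g i)) - \<mu>\<bar> \<ge> real M * t}"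
    proof
      fix g assume "g \<in> (\<lambda>g. hh (f, g)) -` E"
      hence ge: "\<bar>mdvi_eps \<alpha> \<gamma> r P M (hh (f, g)) (Suc j) xz az\<bar> \<ge> t" unfolding E_def by simp
      have v_eq: "mdvi_v \<alpha> \<gamma> r M (hh (f, g)) j = vf"
        unfolding vf_def mdvi_v_def
      proof -
        have "mdvi_state \<alpha> \<gamma> r M (hh (f, g)) j = mdvi_state \<alpha> \<gamma> r M f j"
          by (rule state_dep) (use j in \<open>auto simp: hh_def A_def Iall_def B_def\<close>)
        thus "(\<lambda>y. case mdvi_state \<alpha> \<gamma> r M (hh (f, g)) j of (s, w, wp) \<Rightarrow> w y - \<alpha> * wp y) =
              (\<lambda>y. case mdvi_state \<alpha> \<gamma> r M f j of (s, w, wp) \<Rightarrow> w y - \<alpha> * wp y)" by simp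
      qed
      have emp: "emp_P M (hh (f, g)) j vf xz az = (\<Sum>i\<in>B. vf (g i)) / real M"
        unfolding emp_P_def sumB by (simp add: hh_def A_def B_def)
      have "mdvi_eps \<alpha> \<gamma> r P M (hh (f, g)) (Suc j) xz az = \<gamma> * ((\<Sum>i\<in>B. vf (g i)) / real M - T)"
        unfolding mdvi_eps_def using v_eq emp by (simp add: T_def algebra_simps)
      hence "t \<le> \<gamma> * \<bar>(\<Sum>i\<in>B. vf (g i)) / real M - T\<bar>" using ge g by (simp add: abs_mult)
      also have "\<dots> \<le> \<bar>(\<Sum>i\<in>B. vf (g i)) / real M - T\<bar>" using g by (simp add: mult_left_le_one_le)
      also have "\<dots> = \<bar>(\<Sum>i\<in>B. vf (g i)) - \<mu>\<bar> / real M"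
        using M unfolding mu by (simp add: field_simps)
      finally have "real M * t \<le> \<bar>(\<Sum>i\<in>B. vf (g i)) - \<mu>\<bar>" using M by (simp add: field_simps)
      thus "g \<in> {g \<in> space (measure_pmf pB). \<bar>(\<Sum>i\<in>B. vf (g i)) - \<mu>\<bar> \<ge> real M * t}" by simp
    qed
    interpret Hoeffding_ineq "measure_pmf pB" B "\<lambda>i g. vf (g i)" "\<lambda>_. - H" "\<lambda>_. H" \<mu>
    proof unfold_locales
      show "finite B" by (fact finB)
      show "prob_space.indep_vars (measure_pmf pB) (\<lambda>_. borel) (\<lambda>i g. vf (g i)) B"
        using prob_space.indep_vars_compose2[OF measure_pmf.prob_space_axioms indep_vars_Pi_pmf[OF finB, of undefined Q], of "\<lambda>_. vf" "\<lambda>_. borel"]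
        unfolding pB_def by simp
      show "AE x in measure_pmf pB. vf (x i) \<in> {- H..H}" for i
        using vfb by (intro AE_I2) (metis abs_le_iff atLeastAtMost_iff minus_le_iff)
    qed (simp add: \<mu>_def)
    have "measure_pmf.prob (map_pmf (\<lambda>g. hh (f, g)) pB) E = measure_pmf.prob pB ((\<lambda>g. hh (f, g)) -` E)" by simp
    also have "\<dots> \<le> measure_pmf.prob pB {g \<in> space (measure_pmf pB). \<bar>(\<Sum>i\<in>B. vf (g i)) - \<mu>\<bar> \<ge> real M * t}"
      by (rule measure_pmf.finite_measure_mono[OF sub]) simp
    also have "\<dots> \<le> 2 * exp (-2 * (real M * t)\<^sup>2 / (\<Sum>i\<in>B. (H - - H)\<^sup>2))"
      using Hoeffding_ineq_abs_ge[of "real M * t"] t M Hpos finB cardB by (simp add: card_gt_0_iff)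
    also have "(\<Sum>i\<in>B. (H - - H)\<^sup>2) = real M * (4 * H\<^sup>2)" using cardB by (simp add: power2_eq_square)
    also have "-2 * (real M * t)\<^sup>2 / (real M * (4 * H\<^sup>2)) = - (real M * t\<^sup>2) / (2 * H\<^sup>2)"
      using M Hpos by (simp add: power2_eq_square field_simps)
    finally show ?thesis unfolding bnd_def .
  qed
  hence "measure_pmf.prob (sample_pmf P K M) E \<le> bnd"
    unfolding decomp by (intro bind_pmf_prob_le) (auto simp: bnd_def)
  thus ?thesis unfolding E_def bnd_def H_def .
qed

theorem lemma5:
  fixes P :: "'x::finite \<Rightarrow> 'a::finite \<Rightarrow> 'x pmf"
    and r :: "'x \<Rightarrow> 'a \<Rightarrow> real"
    and \<gamma> \<alpha> \<delta> :: real and K M :: nat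
  assumes "0 \<le> \<gamma>" "\<gamma> < 1"
    and "\<And>x a. r x a \<in> {-1..1}"
    and "0 \<le> \<alpha>" "\<alpha> < 1"
    and "K > 0" "M > 0"
    and "0 < \<delta>" "\<delta> < 1"
  shows "measure_pmf.prob (sample_pmf P K M)
           (- {\<omega>. \<forall>k\<in>{1..K}. sup_norm (mdvi_eps \<alpha> \<gamma> r P M \<omega> k)
                 < 3 * (1 / (1 - \<gamma>)) * sqrt (ln (8 * real K * real CARD('x) * real CARD('a) / \<delta>) / real M)})
         \<le> \<delta> / 4"
proof -
  note g = assms(1,2) and r = assms(3) and al = assms(4) and M = assms(7)
  define H where "H = 1 / (1 - \<gamma>)"
  have Hpos: "H > 0" using g by (simp add: H_def)
  define N where "N = real K * real CARD('x) * real CARD('a)"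
  have Npos: "N > 0" using assms(6) by (simp add: N_def)
  define \<iota> where "\<iota> = ln (8 * N / \<delta>)"
  have "N = real (K * CARD('x) * CARD('a))" by (simp add: N_def)
  moreover have "K * CARD('x) * CARD('a) \<ge> 1" using assms(6) by simp
  ultimately have N1: "N \<ge> 1" by linarith
  have "8 * N / \<delta> \<ge> 1" using N1 assms(8,9) by (simp add: field_simps)
  hence iota: "\<iota> \<ge> 0" unfolding \<iota>_def by simp
  have expi: "exp (- \<iota>) = \<delta> / (8 * N)"
    unfolding \<iota>_def using Npos assms(8) by (simp add: exp_minus exp_ln)
  define thr where "thr = 3 * H * sqrt (\<iota> / real M)"
  have thr0: "thr \<ge> 0" using Hpos iota by (simp add: thr_def)
  define E where "E = (\<lambda>(j::nat, x::'x, a::'a). {\<omega>. \<bar>mdvi_eps \<alpha> \<gamma> r P M \<omega> (Suc j) x a\<bar> \<ge> thr})"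
  define S where "S = {..<K} \<times> (UNIV :: ('x \<times> 'a) set)"
  have sub: "- {\<omega>. \<forall>k\<in>{1..K}. sup_norm (mdvi_eps \<alpha> \<gamma> r P M \<omega> k) < thr} \<subseteq> (\<Union>i\<in>S. E i)"
  proof
    fix \<omega> assume "\<omega> \<in> - {\<omega>. \<forall>k\<in>{1..K}. sup_norm (mdvi_eps \<alpha> \<gamma> r P M \<omega> k) < thr}"
    then obtain k where k: "k \<in> {1..K}" "sup_norm (mdvi_eps \<alpha> \<gamma> r P M \<omega> k) \<ge> thr" by auto
    then obtain j where kj: "k = Suc j" "j < K" by (cases k) auto
    have "sup_norm (mdvi_eps \<alpha> \<gamma> r P M \<omega> k) \<in> range (\<lambda>(x, a). \<bar>mdvi_eps \<alpha> \<gamma> r P M \<omega> k x a\<bar>)"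
      unfolding sup_norm_def by (rule Max_in) auto
    then obtain x a where "sup_norm (mdvi_eps \<alpha> \<gamma> r P M \<omega> k) = \<bar>mdvi_eps \<alpha> \<gamma> r P M \<omega> k x a\<bar>" by auto
    with k kj have "\<omega> \<in> E (j, x, a)" by (simp add: E_def)
    moreover have "(j, x, a) \<in> S" using kj by (simp add: S_def)
    ultimately show "\<omega> \<in> (\<Union>i\<in>S. E i)" by blast
  qed
  define bnd where "bnd = 2 * exp (- (real M * thr\<^sup>2) / (2 * H\<^sup>2))"
  have Eb: "measure_pmf.prob (sample_pmf P K M) (E i) \<le> bnd" if "i \<in> S" for i
  proof -
    obtain j x a where i: "i = (j, x, a)" by (metis prod_cases3)
    with that have "j < K" by (simp add: S_def)
    from eps_event_bound[OF g r al M this thr0, where P=P and xz=x and az=a]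
    show ?thesis unfolding i E_def bnd_def H_def by simp
  qed
  have "real M * thr\<^sup>2 = 9 * H\<^sup>2 * \<iota>"
    unfolding thr_def using M iota by (simp add: power_mult_distrib)
  hence "- (real M * thr\<^sup>2) / (2 * H\<^sup>2) = - (9 / 2) * \<iota>" using Hpos by (simp add: field_simps)
  hence "bnd = 2 * exp (- (9 / 2) * \<iota>)" by (simp add: bnd_def)
  also have "\<dots> \<le> 2 * exp (- \<iota>)" using iota by simp
  finally have bnd: "bnd \<le> \<delta> / (4 * N)" using expi by simp
  have cardS: "real (card S) = N" by (simp add: S_def N_def card_cartesian_product)
  have "measure_pmf.prob (sample_pmf P K M)
           (- {\<omega>. \<forall>k\<in>{1..K}. sup_norm (mdvi_eps \<alpha> \<gamma> r P M \<omega> k) < thr})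
        \<le> measure_pmf.prob (sample_pmf P K M) (\<Union>i\<in>S. E i)"
    by (rule measure_pmf.finite_measure_mono[OF sub]) simp
  also have "\<dots> \<le> (\<Sum>i\<in>S. measure_pmf.prob (sample_pmf P K M) (E i))"
    by (rule measure_pmf.finite_measure_subadditive_finite) (auto simp: S_def)
  also have "\<dots> \<le> (\<Sum>i\<in>S. bnd)" by (rule sum_mono) (rule Eb)
  also have "\<dots> = N * bnd" using cardS by simp
  also have "\<dots> \<le> N * (\<delta> / (4 * N))" using bnd Npos by (intro mult_left_mono) auto
  also have "\<dots> = \<delta> / 4" using Npos by simp
  finally show ?thesis unfolding thr_def H_def \<iota>_def N_def by (simp add: mult.assoc)
qed

end
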